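(* Let $\eta\in(0,1)$ and $N_S>0$, and for $\xi\in[0,1]$ let $$I(\xi;N_S)=4N_S\left\{\frac{1-\xi}{1-2\eta^2\left(\sqrt{\xi N_S(1+\xi N_S)}-\xi N_S\right)}+\frac{\xi\left[(1-\eta^2)^2+\eta^4\right]}{(1-\eta^2)\left(1+2\xi N_S\eta^2(1-\eta^2)\right)}\right\}.$$ Then $\xi=0$ is not a maximizer of $\xi\mapsto I(\xi;N_S)$ over $[0,1]$.
   Context: $I(\xi;N_S)$ is the quantum Fisher information for estimating the transmission $\eta$ of a pure-loss (zero-temperature) bosonic channel using a single-mode pure displaced squeezed state with mean photon number $N_S$, a fraction $\xi$ of which is in squeezing and $1-\xi$ in displacement (displacement along the optimal angle); $\xi=0$ corresponds to a coherent state. *)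

theory Defs
  imports Complex_Main
begin

text \<open>Quantum Fisher information I(xi; N_S) for transmission eta of a pure-loss channel,
  displaced squeezed probe with squeezing fraction xi.\<close>
definition QFI :: "real \<Rightarrow> real \<Rightarrow> real \<Rightarrow> real" where
  "QFI \<eta> NS \<xi> = 4 * NS *
     ((1 - \<xi>) / (1 - 2 * \<eta>^2 * (sqrt (\<xi> * NS * (1 + \<xi> * NS)) - \<xi> * NS))
      + \<xi> * ((1 - \<eta>^2)^2 + \<eta>^4) / ((1 - \<eta>^2) * (1 + 2 * \<xi> * NS * \<eta>^2 * (1 - \<eta>^2))))"

end

theory Submission
  imports Defs
begin

theorem proposition2:
  fixes \<eta> NS :: real
  assumes "0 < \<eta>" and "\<eta> < 1" and "0 < NS"
  shows "\<exists>\<xi>\<in>{0..1}. QFI \<eta> NS \<xi> > QFI \<eta> NS 0"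
proof -
  have e2: "0 < \<eta>^2" "\<eta>^2 < 1" using assms by (auto simp: power_less_one_iff)
  define u where "u = \<eta>^2 * NS / (1 + 2 * \<eta>^2 * NS)"
  have a: "0 < \<eta>^2 * NS" using e2 assms by simp
  have u0: "0 < u" unfolding u_def using a by simp
  have uh: "u < 1/2" unfolding u_def using a by (simp add: field_simps)
  have uNS: "u \<le> NS"
  proof -
    have "u \<le> \<eta>^2 * NS" unfolding u_def using a assms(3)
      by (simp add: field_simps)
    also have "\<dots> \<le> NS" using e2 assms(3) by simp
    finally show ?thesis .
  qed
  have key: "2 * \<eta>^2 * (1 - u) > u / NS"
  proof -
    have "u * (1 + 2 * \<eta>^2 * NS) = \<eta>^2 * NS" unfolding u_def using a
      by (simp add: field_simps)
    hence "u * (1 + 2 * \<eta>^2 * NS) < 2 * \<eta>^2 * NS" using a by (simp add: mult.commute)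
    hence "u < 2 * \<eta>^2 * (1 - u) * NS" by (simp add: algebra_simps)
    thus ?thesis using assms(3) by (simp add: field_simps)
  qed
  define \<xi> where "\<xi> = u^2 / NS"
  have x: "\<xi> * NS = u^2" unfolding \<xi>_def using assms(3) by simp
  have xi0: "0 < \<xi>" unfolding \<xi>_def using u0 assms(3) by simp
  have xi1: "\<xi> \<le> 1"
  proof -
    have "u^2 \<le> u" using u0 uh by (simp add: power2_eq_square mult_le_cancel_left1)
    hence "u^2 \<le> NS" using uNS by linarith
    thus ?thesis unfolding \<xi>_def using assms(3) by simp
  qed
  define s where "s = sqrt (u^2 * (1 + u^2))"
  have s1: "s \<ge> u" unfolding s_def using u0
    by (intro real_le_rsqrt) (simp add: algebra_simps power2_eq_square)
  have s2: "s < u^2 + 1/2" unfolding s_def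
    by (rule real_sqrt_less_mono[of _ "(u^2+1/2)^2", simplified]) (simp add: algebra_simps power2_eq_square)
  define D where "D = 1 - 2 * \<eta>^2 * (s - u^2)"
  have D0: "D > 0"
  proof -
    have "2 * \<eta>^2 * (s - u^2) \<le> 2 * \<eta>^2 * (1/2)" using s2 e2
      by (intro mult_left_mono) auto
    thus ?thesis unfolding D_def using e2 by linarith
  qed
  have "2 * \<eta>^2 * (s - u^2) \<ge> 2 * \<eta>^2 * (u - u^2)" using s1 e2 by simp
  moreover have "2 * \<eta>^2 * (u - u^2) > \<xi>"
  proof -
    have "2 * \<eta>^2 * (u - u^2) = u * (2 * \<eta>^2 * (1 - u))" by (simp add: algebra_simps power2_eq_square)
    also have "\<dots> > u * (u / NS)" using mult_strict_left_mono[OF key u0] by simp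
    finally show ?thesis unfolding \<xi>_def by (simp add: power2_eq_square)
  qed
  ultimately have "1 - \<xi> > D" unfolding D_def by linarith
  hence T1: "(1 - \<xi>) / D > 1" using D0 by simp
  have p: "0 < 2 * \<xi> * NS * \<eta>^2 * (1 - \<eta>^2)" using xi0 e2 assms(3) by (intro mult_pos_pos) auto
  have p2: "0 < 1 + 2 * \<xi> * NS * \<eta>^2 * (1 - \<eta>^2)" using p by linarith
  have p3: "0 < 1 - \<eta>^2" using e2 by simp
  have T2: "\<xi> * ((1 - \<eta>^2)^2 + \<eta>^4) / ((1 - \<eta>^2) * (1 + 2 * \<xi> * NS * \<eta>^2 * (1 - \<eta>^2))) \<ge> 0"
    using xi0 p2 p3 by (intro divide_nonneg_pos mult_nonneg_nonneg mult_pos_pos) auto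
  have "QFI \<eta> NS \<xi> = 4 * NS * ((1 - \<xi>) / D + \<xi> * ((1 - \<eta>^2)^2 + \<eta>^4) / ((1 - \<eta>^2) * (1 + 2 * \<xi> * NS * \<eta>^2 * (1 - \<eta>^2))))"
    unfolding QFI_def D_def s_def x ..
  also have "\<dots> > 4 * NS" using T1 T2 assms(3) by simp
  finally have "QFI \<eta> NS \<xi> > QFI \<eta> NS 0" by (simp add: QFI_def)
  thus ?thesis using xi0 xi1 by auto
qed

end
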